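(* Let $(X,d)$ be a compact metric space, $\mu$ a Borel measure on $X$ with $\mu(X)>0$, $\{f_n\}_{n\in\mathbb{N}}$ a sequence of homeomorphisms of $X$ and $f$ a homeomorphism of $X$ such that $f_n\to f$ uniformly and $f_n^{-1}\to f^{-1}$ uniformly on $X$. Then $x\in UE^\mu_f(X)$ if and only if there exists $\delta>0$ such that for each $z\in B(x,\delta)$, $$\mu\Big(\Big\{y\in B(x,\delta):\ \bigcup_{m\ge 1}\bigcap_{n\ge m}E_z\big(f_n,y,\tfrac{\delta}{3}\big)=\emptyset\Big\}\Big)=0.$$
   Context: $B(x,\epsilon)=\{y:d(x,y)<\epsilon\}$. For a homeomorphism $g$ of $X$, $x,y\in X$ and $\epsilon>0$, $E_y(g,x,\epsilon)=\{k\in\mathbb{Z}: d(g^k(x),g^k(y))>\epsilon\}$. For a point $x$, $\mathfrak{c}>0$ and $z\in B(x,\mathfrak{c})$, $\Gamma^{\mathfrak{c}}_f(z)=\{y\in B(x,\mathfrak{c}): d(f^n(y),f^n(z))\le\mathfrak{c}\ \forall n\in\mathbb{Z}\}$. $x$ is a $\mu$-uniformly expansive point of $f$ if there is $\mathfrak{c}>0$ with $\mu(\Gamma^{\mathfrak{c}}_f(z))=0$ for every $z\in B(x,\mathfrak{c})$; $UE^\mu_f(X)$ is the set of such points. *)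

theory Defs
  imports "HOL-Analysis.Analysis"
begin

definition zit :: "('a \<Rightarrow> 'a) \<Rightarrow> ('a \<Rightarrow> 'a) \<Rightarrow> int \<Rightarrow> 'a \<Rightarrow> 'a" where
  "zit g ginv k = (if k \<ge> 0 then (g ^^ nat k) else (ginv ^^ nat (- k)))"

definition Bl :: "'a::metric_space set \<Rightarrow> 'a \<Rightarrow> real \<Rightarrow> 'a set" where
  "Bl X x e = {y \<in> X. dist x y < e}"

text \<open>E_y(g,x,eps) = {k in Z. d(g^k x, g^k y) > eps}.\<close>
definition Eset :: "('a::metric_space \<Rightarrow> 'a) \<Rightarrow> ('a \<Rightarrow> 'a) \<Rightarrow> 'a \<Rightarrow> 'a \<Rightarrow> real \<Rightarrow> int set" where
  "Eset g ginv y x eps = {k. dist (zit g ginv k x) (zit g ginv k y) > eps}"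

definition Gam :: "'a::metric_space set \<Rightarrow> ('a \<Rightarrow> 'a) \<Rightarrow> ('a \<Rightarrow> 'a) \<Rightarrow> 'a \<Rightarrow> real \<Rightarrow> 'a \<Rightarrow> 'a set" where
  "Gam X f finv x c z = {y \<in> Bl X x c. \<forall>n::int. dist (zit f finv n y) (zit f finv n z) \<le> c}"

definition UE :: "'a::metric_space measure \<Rightarrow> 'a set \<Rightarrow> ('a \<Rightarrow> 'a) \<Rightarrow> ('a \<Rightarrow> 'a) \<Rightarrow> 'a set" where
  "UE M X f finv = {x \<in> X. \<exists>c>0. \<forall>z \<in> Bl X x c. emeasure M (Gam X f finv x c z) = 0}"

end

theory Submission
  imports Defs
begin

lemma iter_cont:
  assumes "continuous_on X g" "g ` X \<subseteq> X"
  shows "continuous_on X (g ^^ j) \<and> (g ^^ j) ` X \<subseteq> X"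
proof (induction j)
  case 0 then show ?case by (simp add: continuous_on_id)
next
  case (Suc j)
  then have "continuous_on X (g \<circ> (g ^^ j))"
    using assms by (meson continuous_on_compose continuous_on_subset)
  then show ?case using Suc assms by auto
qed

lemma zit_cont:
  assumes "homeomorphism X X g ginv"
  shows "continuous_on X (zit g ginv k) \<and> zit g ginv k ` X \<subseteq> X"
proof -
  have "continuous_on X g" "g ` X \<subseteq> X" "continuous_on X ginv" "ginv ` X \<subseteq> X"
    using assms unfolding homeomorphism_def by auto
  then show ?thesis unfolding zit_def using iter_cont[of X g] iter_cont[of X ginv] by auto
qed

lemma iter_conv:
  assumes "\<And>n. fs n ` X \<subseteq> X" "continuous_on X f" "f ` X \<subseteq> X"
    "uniform_limit X fs f sequentially" "y \<in> X"
  shows "(\<lambda>m. (fs m ^^ j) y) \<longlonglongrightarrow> (f ^^ j) y"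
proof (induction j)
  case 0 then show ?case by simp
next
  case (Suc j)
  define a where "a = (\<lambda>m. (fs m ^^ j) y)"
  have aX: "a m \<in> X" for m
  proof -
    have "(fs m ^^ j) ` X \<subseteq> X" by (induction j) (use assms(1) in auto)
    then show ?thesis using assms(5) a_def by auto
  qed
  have lX: "(f ^^ j) y \<in> X"
  proof -
    have "(f ^^ j) ` X \<subseteq> X" by (induction j) (use assms(3) in auto)
    then show ?thesis using assms(5) by auto
  qed
  have t1: "(\<lambda>m. f (a m)) \<longlonglongrightarrow> f ((f ^^ j) y)"
    using continuous_on_tendsto_compose[OF assms(2) Suc[folded a_def] lX] aX by auto
  show ?case unfolding tendsto_iff
  proof (intro allI impI)
    fix e :: real assume e: "e > 0"
    have ev1: "\<forall>\<^sub>F m in sequentially. dist (f (a m)) (f ((f ^^ j) y)) < e/2"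
      using t1 e unfolding tendsto_iff by (meson half_gt_zero)
    have ev2: "\<forall>\<^sub>F m in sequentially. \<forall>x\<in>X. dist (fs m x) (f x) < e/2"
      using assms(4) e unfolding uniform_limit_iff by (meson half_gt_zero)
    show "\<forall>\<^sub>F m in sequentially. dist ((fs m ^^ Suc j) y) ((f ^^ Suc j) y) < e"
      using ev1 ev2
    proof eventually_elim
      case (elim m)
      have "dist (fs m (a m)) (f (a m)) < e/2" using elim aX by auto
      then have "dist (fs m (a m)) (f ((f ^^ j) y)) < e"
        using elim(1) dist_triangle[of "fs m (a m)" "f ((f ^^ j) y)" "f (a m)"] by linarith
      then show ?case by (simp add: a_def)
    qed
  qed
qed

lemma zit_conv:
  assumes "\<And>n. homeomorphism X X (fs n) (gs n)" "homeomorphism X X f finv"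
    "uniform_limit X fs f sequentially" "uniform_limit X gs finv sequentially" "y \<in> X"
  shows "(\<lambda>m. zit (fs m) (gs m) k y) \<longlonglongrightarrow> zit f finv k y"
proof -
  have a: "fs n ` X \<subseteq> X" "gs n ` X \<subseteq> X" for n
    using assms(1)[of n] unfolding homeomorphism_def by auto
  have b: "continuous_on X f" "f ` X \<subseteq> X" "continuous_on X finv" "finv ` X \<subseteq> X"
    using assms(2) unfolding homeomorphism_def by auto
  show ?thesis unfolding zit_def
    using iter_conv[OF a(1) b(1,2) assms(3,5)] iter_conv[OF a(2) b(3,4) assms(4,5)] by auto
qed

lemma dist_meas:
  assumes "homeomorphism X X g ginv"
  shows "(\<lambda>y. dist (zit g ginv k y) w) \<in> borel_measurable (restrict_space borel X)"
proof -
  have "continuous_on X (zit g ginv k)" using zit_cont[OF assms] by auto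
  then have "continuous_on X (\<lambda>y. dist (zit g ginv k y) w)"
    by (intro continuous_intros)
  then show ?thesis by (rule borel_measurable_continuous_on_restrict)
qed

lemma dist_meas0:
  "(\<lambda>y. dist x y) \<in> borel_measurable (restrict_space borel X)"
  by (intro borel_measurable_continuous_on_restrict continuous_intros)

theorem theorem3p6:
  fixes X :: "'a::metric_space set" and M :: "'a measure"
    and fs gs :: "nat \<Rightarrow> 'a \<Rightarrow> 'a" and f finv :: "'a \<Rightarrow> 'a" and x :: 'a
  assumes "compact X"
    and "sets M = sets (restrict_space borel X)"
    and "emeasure M X > 0"
    and "\<And>n. homeomorphism X X (fs n) (gs n)"
    and "homeomorphism X X f finv"
    and "uniform_limit X fs f sequentially"
    and "uniform_limit X gs finv sequentially"
    and "x \<in> X"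
  shows "x \<in> UE M X f finv \<longleftrightarrow>
    (\<exists>\<delta>>0. \<forall>z \<in> Bl X x \<delta>.
       emeasure M {y \<in> Bl X x \<delta>.
          (\<Union>m\<in>{1::nat..}. \<Inter>n\<in>{m..}. Eset (fs n) (gs n) z y (\<delta>/3)) = {}} = 0)"
proof -
  note [measurable] = dist_meas[OF assms(4)] dist_meas[OF assms(5)] dist_meas0
  have sp: "X = space (restrict_space borel X)" by (simp add: space_restrict_space)
  have Seq: "{y \<in> Bl X x d.
          (\<Union>m\<in>{1::nat..}. \<Inter>n\<in>{m..}. Eset (fs n) (gs n) z y e) = {}}
     = {y \<in> X. dist x y < d \<and> (\<forall>k::int. \<forall>m::nat. m \<ge> 1 \<longrightarrow>
          (\<exists>n\<ge>m. dist (zit (fs n) (gs n) k y) (zit (fs n) (gs n) k z) \<le> e))}" for d e z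
    unfolding Bl_def Eset_def by (auto simp: set_eq_iff not_less; meson)
  have Smeas: "{y \<in> X. dist x y < d \<and> (\<forall>k::int. \<forall>m::nat. m \<ge> 1 \<longrightarrow>
          (\<exists>n\<ge>m. dist (zit (fs n) (gs n) k y) (zit (fs n) (gs n) k z) \<le> e))} \<in> sets M" for d e z
    unfolding assms(2) by (subst (1) sp) measurable
  have Gmeas: "Gam X f finv x c z \<in> sets M" for c z
    unfolding assms(2) Gam_def Bl_def by (subst (1) sp) measurable
  have lim: "(\<lambda>n. dist (zit (fs n) (gs n) k y) (zit (fs n) (gs n) k z))
      \<longlonglongrightarrow> dist (zit f finv k y) (zit f finv k z)" if "y \<in> X" "z \<in> X" for k y z
    by (intro tendsto_dist zit_conv[OF assms(4,5,6,7)] that)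
  show ?thesis
  proof
    assume "x \<in> UE M X f finv"
    then obtain c where c: "c > 0" "\<forall>z\<in>Bl X x c. emeasure M (Gam X f finv x c z) = 0"
      unfolding UE_def by auto
    show "\<exists>\<delta>>0. \<forall>z \<in> Bl X x \<delta>.
       emeasure M {y \<in> Bl X x \<delta>.
          (\<Union>m\<in>{1::nat..}. \<Inter>n\<in>{m..}. Eset (fs n) (gs n) z y (\<delta>/3)) = {}} = 0"
    proof (intro exI[of _ c] conjI ballI)
      fix z assume z: "z \<in> Bl X x c"
      have sub: "{y \<in> X. dist x y < c \<and> (\<forall>k::int. \<forall>m::nat. m \<ge> 1 \<longrightarrow>
          (\<exists>n\<ge>m. dist (zit (fs n) (gs n) k y) (zit (fs n) (gs n) k z) \<le> c/3))}
          \<subseteq> Gam X f finv x c z"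
      proof
        fix y assume y: "y \<in> {y \<in> X. dist x y < c \<and> (\<forall>k::int. \<forall>m::nat. m \<ge> 1 \<longrightarrow>
          (\<exists>n\<ge>m. dist (zit (fs n) (gs n) k y) (zit (fs n) (gs n) k z) \<le> c/3))}"
        have "dist (zit f finv k y) (zit f finv k z) \<le> c" for k
        proof (rule ccontr)
          assume "\<not> ?thesis"
          then have "dist (zit f finv k y) (zit f finv k z) > c/3" using c by auto
          from order_tendstoD(1)[OF lim this] y z
          obtain N where N: "\<And>n. n \<ge> N \<Longrightarrow> dist (zit (fs n) (gs n) k y) (zit (fs n) (gs n) k z) > c/3"
            unfolding Bl_def eventually_sequentially by auto
          have yy: "\<forall>k m. 1 \<le> m \<longrightarrow> (\<exists>n\<ge>m. dist (zit (fs n) (gs n) k y) (zit (fs n) (gs n) k z) \<le> c/3)"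
            using y by blast
          have "\<exists>n\<ge>max N 1. dist (zit (fs n) (gs n) k y) (zit (fs n) (gs n) k z) \<le> c/3"
            using yy[rule_format, of "max N 1" k] by simp
          then obtain n where "n \<ge> max N 1" "dist (zit (fs n) (gs n) k y) (zit (fs n) (gs n) k z) \<le> c/3"
            by blast
          with N[of n] show False by auto
        qed
        then show "y \<in> Gam X f finv x c z" using y unfolding Gam_def Bl_def by auto
      qed
      have "emeasure M {y \<in> X. dist x y < c \<and> (\<forall>k::int. \<forall>m::nat. m \<ge> 1 \<longrightarrow>
          (\<exists>n\<ge>m. dist (zit (fs n) (gs n) k y) (zit (fs n) (gs n) k z) \<le> c/3))} \<le> 0"
        using emeasure_mono[OF sub Gmeas] c z by auto
      then show "emeasure M {y \<in> Bl X x c.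
          (\<Union>m\<in>{1::nat..}. \<Inter>n\<in>{m..}. Eset (fs n) (gs n) z y (c/3)) = {}} = 0"
        unfolding Seq by simp
    qed (use c in auto)
  next
    assume "\<exists>\<delta>>0. \<forall>z \<in> Bl X x \<delta>.
       emeasure M {y \<in> Bl X x \<delta>.
          (\<Union>m\<in>{1::nat..}. \<Inter>n\<in>{m..}. Eset (fs n) (gs n) z y (\<delta>/3)) = {}} = 0"
    then obtain d where d: "d > 0" "\<forall>z \<in> Bl X x d.
       emeasure M {y \<in> X. dist x y < d \<and> (\<forall>k::int. \<forall>m::nat. m \<ge> 1 \<longrightarrow>
          (\<exists>n\<ge>m. dist (zit (fs n) (gs n) k y) (zit (fs n) (gs n) k z) \<le> d/3))} = 0"
      unfolding Seq by auto
    have "\<forall>z \<in> Bl X x (d/4). emeasure M (Gam X f finv x (d/4) z) = 0"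
    proof
      fix z assume z: "z \<in> Bl X x (d/4)"
      have sub: "Gam X f finv x (d/4) z \<subseteq> {y \<in> X. dist x y < d \<and> (\<forall>k::int. \<forall>m::nat. m \<ge> 1 \<longrightarrow>
          (\<exists>n\<ge>m. dist (zit (fs n) (gs n) k y) (zit (fs n) (gs n) k z) \<le> d/3))}"
      proof
        fix y assume y: "y \<in> Gam X f finv x (d/4) z"
        have "\<exists>n\<ge>m. dist (zit (fs n) (gs n) k y) (zit (fs n) (gs n) k z) \<le> d/3" for k m
        proof -
          have "dist (zit f finv k y) (zit f finv k z) \<le> d/4" using y unfolding Gam_def by blast
          then have "dist (zit f finv k y) (zit f finv k z) < d/3" using d(1) by linarith
          from order_tendstoD(2)[OF lim this] y z
          obtain N where N: "\<And>n. n \<ge> N \<Longrightarrow> dist (zit (fs n) (gs n) k y) (zit (fs n) (gs n) k z) < d/3"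
            unfolding Bl_def Gam_def eventually_sequentially by auto
          show ?thesis using N[of "max m N"] by (intro exI[of _ "max m N"]) auto
        qed
        then show "y \<in> {y \<in> X. dist x y < d \<and> (\<forall>k::int. \<forall>m::nat. m \<ge> 1 \<longrightarrow>
          (\<exists>n\<ge>m. dist (zit (fs n) (gs n) k y) (zit (fs n) (gs n) k z) \<le> d/3))}"
          using y d unfolding Gam_def Bl_def by auto
      qed
      have zz: "z \<in> Bl X x d" using z d unfolding Bl_def by auto
      have "emeasure M (Gam X f finv x (d/4) z) \<le> 0"
        using emeasure_mono[OF sub Smeas] d(2) zz by auto
      then show "emeasure M (Gam X f finv x (d/4) z) = 0" by simp
    qed
    then show "x \<in> UE M X f finv" unfolding UE_def using assms(8) d(1)
      by (intro CollectI conjI exI[of _ "d/4"]) auto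
  qed
qed

end
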